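(* Let $P_d$ be the left path on $d$ vertices (each vertex except the last is the parent of the next via a left-child edge), with all edges contiguous, and let $x,x'$ be two distinct vertices of $P_d$. Let $(P,e)$ be any tree pattern, and let $Q$ and $Q'$ be the tree patterns obtained from $(P_d,1\cdots1)$ by attaching $(P,e)$ as the right subtree of $x$, respectively of $x'$, via a non-contiguous edge. Then $Q$ and $Q'$ are Wilf-equivalent.
   Context: $\mathcal{T}_n$ is the set of binary trees on $n$ vertices labeled $1,\dots,n$ by the search tree property (labels of a combined tree are reassigned by this property). $c_L,c_R,p$: left child, right child, parent. A tree pattern is $(P,e)$, $P\in\mathcal{T}_k$, $e\colon[k]\setminus\{\text{root}\}\to\{0,1\}$; the edge $(i,p(i))$ is contiguous if $e(i)=1$, non-contiguous if $e(i)=0$. $T\in\mathcal{T}_n$ contains $(P,e)$ if there is an injection $f\colon[k]\to[n]$ such that for every non-root $i$ of $P$: if $e(i)=1$, $f(i)$ is the left (resp. right) child of $f(p(i))$ when $i$ is the left (resp. right) child of $p(i)$; if $e(i)=0$, $f(i)$ lies in the left (resp. right) subtree of $f(p(i))$. $\mathcal{T}_n(Q)$ is the set of avoiders of $Q$. $Q,Q'$ are Wilf-equivalent if $|\mathcal{T}_n(Q)|=|\mathcal{T}_n(Q')|$ for all $n\ge0$. *)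

theory Defs
  imports Main
begin

text \<open>Since labels of a tree in T_n are determined by the
search tree property, a tree in T_n is the same as a binary tree shape with n vertices.
Vertices are addressed by positions: lists of directions, False = left, True = right.\<close>

datatype tree = Leaf | Node tree tree

fun tsize :: "tree \<Rightarrow> nat" where
  "tsize Leaf = 0"
| "tsize (Node l r) = Suc (tsize l + tsize r)"

fun tpos :: "tree \<Rightarrow> bool list set" where
  "tpos Leaf = {}"
| "tpos (Node l r) = {[]} \<union> Cons False ` tpos l \<union> Cons True ` tpos r"

text \<open>Tree patterns (P,e): a nonempty binary tree in which each child edge carries
a flag: True = contiguous (e = 1), False = non-contiguous (e = 0).\<close>

datatype pat = PN "(bool \<times> pat) option" "(bool \<times> pat) option"

fun ppos :: "pat \<Rightarrow> bool list set" where
  "ppos (PN l r) = {[]}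
     \<union> (case l of None \<Rightarrow> {} | Some (c, p) \<Rightarrow> Cons False ` ppos p)
     \<union> (case r of None \<Rightarrow> {} | Some (c, p) \<Rightarrow> Cons True ` ppos p)"

text \<open>Contiguity flag e(i) of the edge from the (non-root) vertex at position w to its parent.\<close>
fun pedge :: "pat \<Rightarrow> bool list \<Rightarrow> bool" where
  "pedge (PN l r) [] = False"
| "pedge (PN l r) (b # w) =
     (case (if b then r else l) of
        None \<Rightarrow> False
      | Some (c, p) \<Rightarrow> (if w = [] then c else pedge p w))"

definition contains :: "tree \<Rightarrow> pat \<Rightarrow> bool" where
  "contains T Q \<longleftrightarrow> (\<exists>f. inj_on f (ppos Q) \<and> f ` ppos Q \<subseteq> tpos T \<and>
     (\<forall>w b. w @ [b] \<in> ppos Q \<longrightarrow>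
        (if pedge Q (w @ [b]) then f (w @ [b]) = f w @ [b]
         else (\<exists>u. f (w @ [b]) = f w @ [b] @ u))))"

definition avoiders :: "nat \<Rightarrow> pat \<Rightarrow> tree set" where
  "avoiders n Q = {T. tsize T = n \<and> \<not> contains T Q}"

definition wilf_equiv :: "pat \<Rightarrow> pat \<Rightarrow> bool" where
  "wilf_equiv Q Q' \<longleftrightarrow> (\<forall>n. card (avoiders n Q) = card (avoiders n Q'))"

text \<open>lpa m a P: the left path with m+1 vertices (depth 0..m), all edges contiguous;
if a = Some i, the pattern P is attached as right subtree of the vertex at depth i
via a non-contiguous edge.\<close>
fun lpa :: "nat \<Rightarrow> nat option \<Rightarrow> pat \<Rightarrow> pat" where
  "lpa 0 a P = PN None (if a = Some 0 then Some (False, P) else None)"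
| "lpa (Suc m) a P =
     PN (Some (True, lpa m (case a of Some (Suc j) \<Rightarrow> Some j | _ \<Rightarrow> None) P))
        (if a = Some 0 then Some (False, P) else None)"

end

theory Submission
  imports Defs "HOL-Library.Sublist"
begin

definition econd :: "pat \<Rightarrow> (bool list \<Rightarrow> bool list) \<Rightarrow> bool" where
  "econd Q f \<longleftrightarrow> (\<forall>w b. w @ [b] \<in> ppos Q \<longrightarrow>
        (if pedge Q (w @ [b]) then f (w @ [b]) = f w @ [b]
         else (\<exists>u. f (w @ [b]) = f w @ [b] @ u)))"

lemma ppos_nil[simp]: "[] \<in> ppos Q"
  by (cases Q) auto

lemma ppos_Cons_Some:
  "(if b then r else l) = Some (c, q) \<Longrightarrow> (b # w \<in> ppos (PN l r)) = (w \<in> ppos q)"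
  by (cases b; cases l; cases r) auto

lemma ppos_Cons_None:
  "(if b then r else l) = None \<Longrightarrow> b # w \<notin> ppos (PN l r)"
  by (cases b; cases l; cases r) auto

lemma ppos_Cons_ex:
  "b # w \<in> ppos (PN l r) \<Longrightarrow> \<exists>c q. (if b then r else l) = Some (c, q) \<and> w \<in> ppos q"
  by (cases b; cases l; cases r) auto

lemma pedge_single: "(if b then r else l) = Some (c, q) \<Longrightarrow> pedge (PN l r) [b] = c"
  by (cases b) auto

lemma pedge_Cons: "(if b then r else l) = Some (c, q) \<Longrightarrow> w \<noteq> [] \<Longrightarrow> pedge (PN l r) (b # w) = pedge q w"
  by (cases b) auto

lemma ppos_prefix: "w @ v \<in> ppos Q \<Longrightarrow> w \<in> ppos Q"
proof (induction w arbitrary: Q)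
  case Nil
  then show ?case by simp
next
  case (Cons b w)
  obtain l r where Q: "Q = PN l r" by (cases Q)
  from Cons.prems Q obtain c q where cq: "(if b then r else l) = Some (c, q)" "w @ v \<in> ppos q"
    using ppos_Cons_ex by fastforce
  then show ?case using Cons.IH Q ppos_Cons_Some by metis
qed

lemma econd_ext:
  assumes "econd Q f" "w @ b # v \<in> ppos Q"
  shows "\<exists>u. f (w @ b # v) = f w @ b # u"
  using assms(2)
proof (induction v rule: rev_induct)
  case Nil
  have "w @ [b] \<in> ppos Q" using Nil by simp
  then have "if pedge Q (w @ [b]) then f (w @ [b]) = f w @ [b] else (\<exists>u. f (w @ [b]) = f w @ [b] @ u)"
    using assms(1) unfolding econd_def by blast
  then show ?case by (cases "pedge Q (w @ [b])") auto
next
  case (snoc c v)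
  have "w @ b # v \<in> ppos Q" using snoc.prems ppos_prefix[of "w @ b # v" "[c]"] by simp
  then obtain u where u: "f (w @ b # v) = f w @ b # u" using snoc.IH by blast
  have "(w @ b # v) @ [c] \<in> ppos Q" using snoc.prems by simp
  then have "if pedge Q ((w @ b # v) @ [c]) then f ((w @ b # v) @ [c]) = f (w @ b # v) @ [c]
     else (\<exists>u. f ((w @ b # v) @ [c]) = f (w @ b # v) @ [c] @ u)"
    using assms(1) unfolding econd_def by blast
  then have "\<exists>u'. f ((w @ b # v) @ [c]) = f (w @ b # v) @ [c] @ u'"
    by (cases "pedge Q ((w @ b # v) @ [c])") auto
  then show ?case using u by auto
qed

lemma econd_root:
  assumes "econd Q f" "w \<in> ppos Q"
  shows "\<exists>u. f w = f [] @ u"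
proof (cases w)
  case Nil then show ?thesis by simp
next
  case (Cons b v)
  then show ?thesis using econd_ext[of Q f "[]" b v] assms by auto
qed

lemma econd_inj:
  assumes "econd Q f"
  shows "inj_on f (ppos Q)"
proof (rule inj_onI, rule ccontr)
  fix x y assume x: "x \<in> ppos Q" and y: "y \<in> ppos Q" and eq: "f x = f y" and ne: "x \<noteq> y"
  have pre: False if p1: "u @ b # t \<in> ppos Q" and p2: "f u = f (u @ b # t)" for u b t
  proof -
    obtain s where "f (u @ b # t) = f u @ b # s" using econd_ext[OF assms p1] by blast
    then have "length (f (u @ b # t)) = length (f u) + Suc (length s)" by simp
    then show False using p2 by simp
  qed
  show False
  proof (cases "prefix x y")
    case True
    then obtain t where t: "y = x @ t" by (rule prefixE)
    show False
    proof (cases t)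
      case Nil then show False using t ne by simp
    next
      case (Cons b t')
      then have yy: "y = x @ b # t'" using t by simp
      show False using pre[of x b t'] y eq unfolding yy by blast
    qed
  next
    case nxy: False
    show False
    proof (cases "prefix y x")
      case True
      then obtain t where t: "x = y @ t" by (rule prefixE)
      show False
      proof (cases t)
        case Nil then show False using t ne by simp
      next
        case (Cons b t')
        then have xx: "x = y @ b # t'" using t by simp
        show False using pre[of y b t'] x eq[symmetric] unfolding xx by blast
      qed
    next
      case False
      then have par: "x \<parallel> y" using nxy unfolding parallel_def by blast
      then obtain as b bs c cs where bc: "b \<noteq> c" "x = as @ b # bs" "y = as @ c # cs"
        using parallel_decomp[OF par] by blast
      obtain s1 where s1: "f x = f as @ b # s1" using econd_ext[OF assms, of as b bs] x bc(2) by blast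
      obtain s2 where s2: "f y = f as @ c # s2" using econd_ext[OF assms, of as c cs] y bc(3) by blast
      have "f as @ b # s1 = f as @ c # s2" using eq s1 s2 by simp
      then show False using bc(1) by simp
    qed
  qed
qed

lemma contains_def': "contains T Q \<longleftrightarrow> (\<exists>f. inj_on f (ppos Q) \<and> f ` ppos Q \<subseteq> tpos T \<and> econd Q f)"
  by (simp only: contains_def econd_def)

lemma contains_alt: "contains T Q \<longleftrightarrow> (\<exists>f. f ` ppos Q \<subseteq> tpos T \<and> econd Q f)"
proof
  assume "contains T Q"
  then show "\<exists>f. f ` ppos Q \<subseteq> tpos T \<and> econd Q f" unfolding contains_def' by blast
next
  assume "\<exists>f. f ` ppos Q \<subseteq> tpos T \<and> econd Q f"
  then obtain f where f: "f ` ppos Q \<subseteq> tpos T" "econd Q f" by blast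
  then show "contains T Q" unfolding contains_def' using econd_inj[OF f(2)] by blast
qed


definition E :: "tree \<Rightarrow> pat \<Rightarrow> bool" where
  "E U Q \<longleftrightarrow> (\<exists>f. f [] = [] \<and> f ` ppos Q \<subseteq> tpos U \<and> econd Q f)"

fun sideE :: "tree \<Rightarrow> (bool \<times> pat) option \<Rightarrow> bool" where
  "sideE U None = True"
| "sideE U (Some (c, q)) = (if c then E U q else contains U q)"

definition sideG :: "tree \<Rightarrow> (bool \<times> pat) option \<Rightarrow> (bool list \<Rightarrow> bool list) \<Rightarrow> bool" where
  "sideG U ob g = (case ob of None \<Rightarrow> True
      | Some (c, q) \<Rightarrow> g ` ppos q \<subseteq> tpos U \<and> econd q g \<and> (c \<longrightarrow> g [] = []))"

lemma tpos_Cons: "(bb # u \<in> tpos (Node a b)) = (u \<in> tpos (if bb then b else a))"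
  by (cases bb) auto

lemma econd_Cons: "econd Q g \<Longrightarrow> econd Q (\<lambda>w. x # g w)"
  unfolding econd_def
proof (intro allI impI)
  fix w b assume A: "\<forall>w b. w @ [b] \<in> ppos Q \<longrightarrow> (if pedge Q (w @ [b]) then g (w @ [b]) = g w @ [b] else \<exists>u. g (w @ [b]) = g w @ [b] @ u)"
    and B: "w @ [b] \<in> ppos Q"
  from A B have "if pedge Q (w @ [b]) then g (w @ [b]) = g w @ [b] else \<exists>u. g (w @ [b]) = g w @ [b] @ u" by blast
  then show "if pedge Q (w @ [b]) then x # g (w @ [b]) = (x # g w) @ [b] else \<exists>u. x # g (w @ [b]) = (x # g w) @ [b] @ u"
    by (cases "pedge Q (w @ [b])") auto
qed

lemma econd_tl:
  assumes "econd Q f" "\<And>w. w \<in> ppos Q \<Longrightarrow> f w \<noteq> []"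
  shows "econd Q (\<lambda>w. tl (f w))"
  unfolding econd_def
proof (intro allI impI)
  fix w b assume B: "w @ [b] \<in> ppos Q"
  then have "w \<in> ppos Q" using ppos_prefix by blast
  then have ne: "f w \<noteq> []" using assms(2) by blast
  from assms(1) B have "if pedge Q (w @ [b]) then f (w @ [b]) = f w @ [b] else \<exists>u. f (w @ [b]) = f w @ [b] @ u"
    unfolding econd_def by blast
  then show "if pedge Q (w @ [b]) then tl (f (w @ [b])) = tl (f w) @ [b] else \<exists>u. tl (f (w @ [b])) = tl (f w) @ [b] @ u"
    using ne by (cases "pedge Q (w @ [b])") auto
qed

lemma econd_restrict:
  assumes "econd (PN l r) f" "(if b then r else l) = Some (c, q)"
  shows "econd q (\<lambda>w. f (b # w))"
  unfolding econd_def
proof (intro allI impI)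
  fix w b' assume B: "w @ [b'] \<in> ppos q"
  then have "(b # w) @ [b'] \<in> ppos (PN l r)" using ppos_Cons_Some[OF assms(2)] by simp
  then have "if pedge (PN l r) ((b # w) @ [b']) then f ((b # w) @ [b']) = f (b # w) @ [b'] else \<exists>u. f ((b # w) @ [b']) = f (b # w) @ [b'] @ u"
    using assms(1) unfolding econd_def by blast
  moreover have "pedge (PN l r) ((b # w) @ [b']) = pedge q (w @ [b'])"
    using pedge_Cons[OF assms(2)] by simp
  ultimately show "if pedge q (w @ [b']) then f (b # w @ [b']) = f (b # w) @ [b'] else \<exists>u. f (b # w @ [b']) = f (b # w) @ [b'] @ u"
    by (cases "pedge q (w @ [b'])") (auto simp del: pedge.simps)
qed

lemma econd_rootstep:
  assumes "econd (PN l r) f" "(if b then r else l) = Some (c, q)"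
  shows "if c then f [b] = f [] @ [b] else \<exists>u. f [b] = f [] @ [b] @ u"
proof -
  have "[] @ [b] \<in> ppos (PN l r)" using ppos_Cons_Some[OF assms(2), of "[]"] by simp
  then have "if pedge (PN l r) ([] @ [b]) then f ([] @ [b]) = f [] @ [b] else \<exists>u. f ([] @ [b]) = f [] @ [b] @ u"
    using assms(1) unfolding econd_def by blast
  then show ?thesis using pedge_single[OF assms(2)] by (cases c) (auto simp del: pedge.simps)
qed

lemma E_contains: "E U Q \<Longrightarrow> contains U Q"
  unfolding E_def contains_alt by blast

lemma contains_Leaf[simp]: "\<not> contains Leaf Q"
proof
  assume "contains Leaf Q"
  then obtain f where "f ` ppos Q \<subseteq> tpos Leaf" unfolding contains_alt by blast
  then have "f [] \<in> tpos Leaf" using ppos_nil[of Q] by blast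
  then show False by simp
qed

lemma E_Leaf[simp]: "\<not> E Leaf Q"
  using E_contains contains_Leaf by blast

lemma E_side:
  assumes "E (Node a b) (PN l r)" "(if bb then r else l) = Some (c, q)"
  shows "if c then E (if bb then b else a) q else contains (if bb then b else a) q"
proof -
  obtain f where f: "f [] = []" "f ` ppos (PN l r) \<subseteq> tpos (Node a b)" "econd (PN l r) f"
    using assms(1) unfolding E_def by blast
  define g where "g = (\<lambda>w. f (bb # w))"
  have eg: "econd q g" unfolding g_def using econd_restrict[OF f(3) assms(2)] .
  have gw: "\<exists>u. g w = bb # u" if "w \<in> ppos q" for w
  proof -
    have "[] @ bb # w \<in> ppos (PN l r)" using ppos_Cons_Some[OF assms(2)] that by simp
    then show ?thesis using econd_ext[OF f(3), of "[]" bb w] f(1) unfolding g_def by simp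
  qed
  define h where "h = (\<lambda>w. tl (g w))"
  have eh: "econd q h" unfolding h_def
    using econd_tl[OF eg] gw by fastforce
  have im: "h ` ppos q \<subseteq> tpos (if bb then b else a)"
  proof
    fix x assume "x \<in> h ` ppos q"
    then obtain w where w: "w \<in> ppos q" "x = h w" by blast
    obtain u where u: "g w = bb # u" using gw[OF w(1)] by blast
    have "bb # w \<in> ppos (PN l r)" using ppos_Cons_Some[OF assms(2)] w(1) by simp
    then have "g w \<in> tpos (Node a b)" using f(2) unfolding g_def by blast
    then show "x \<in> tpos (if bb then b else a)" using u w(2) tpos_Cons unfolding h_def by simp
  qed
  show ?thesis
  proof (cases c)
    case True
    then have "f [bb] = [bb]" using econd_rootstep[OF f(3) assms(2)] f(1) by simp
    then have "h [] = []" unfolding h_def g_def by simp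
    then show ?thesis using True eh im unfolding E_def by auto
  next
    case False
    have "contains (if bb then b else a) q" unfolding contains_alt using eh im by blast
    then show ?thesis using False by simp
  qed
qed

lemma sideE_G: "sideE U ob \<Longrightarrow> \<exists>g. sideG U ob g"
proof (cases ob)
  case None
  then show ?thesis by (simp add: sideG_def)
next
  case (Some a)
  then obtain c q where cq: "ob = Some (c, q)" by (cases a) auto
  assume s: "sideE U ob"
  show ?thesis
  proof (cases c)
    case True
    then have "E U q" using s cq by simp
    then show ?thesis unfolding E_def sideG_def cq using True by auto
  next
    case False
    then have "contains U q" using s cq by simp
    then show ?thesis unfolding contains_alt sideG_def cq using False by auto
  qed
qed

lemma E_Node: "E (Node a b) (PN l r) \<longleftrightarrow> sideE a l \<and> sideE b r"
proof
  assume A: "E (Node a b) (PN l r)"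
  have "sideE a l"
  proof (cases l)
    case (Some x)
    then obtain c q where "l = Some (c, q)" by (cases x) auto
    then show ?thesis using E_side[OF A, of False c q] by (cases c) auto
  qed simp
  moreover have "sideE b r"
  proof (cases r)
    case (Some x)
    then obtain c q where "r = Some (c, q)" by (cases x) auto
    then show ?thesis using E_side[OF A, of True c q] by (cases c) auto
  qed simp
  ultimately show "sideE a l \<and> sideE b r" ..
next
  assume "sideE a l \<and> sideE b r"
  then obtain gL gR where gL: "sideG a l gL" and gR: "sideG b r gR"
    using sideE_G by blast
  have G: "g ` ppos q \<subseteq> tpos (if bb then b else a) \<and> econd q g \<and> (c \<longrightarrow> g [] = [])"
    if "(if bb then r else l) = Some (c, q)" "g = (if bb then gR else gL)" for bb c q g
    using that gL gR by (cases bb) (auto simp: sideG_def)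
  define f where "f = (\<lambda>w. case w of [] \<Rightarrow> [] | bb # w' \<Rightarrow> bb # (if bb then gR else gL) w')"
  have ec: "econd (PN l r) f"
    unfolding econd_def
  proof (intro allI impI)
    fix w b' assume B: "w @ [b'] \<in> ppos (PN l r)"
    show "if pedge (PN l r) (w @ [b']) then f (w @ [b']) = f w @ [b'] else \<exists>u. f (w @ [b']) = f w @ [b'] @ u"
    proof (cases w)
      case Nil
      then have "b' # [] \<in> ppos (PN l r)" using B by simp
      then obtain c q where cq: "(if b' then r else l) = Some (c, q)" using ppos_Cons_ex by blast
      have g: "c \<longrightarrow> (if b' then gR else gL) [] = []" using G[OF cq refl] by blast
      show ?thesis using pedge_single[OF cq] g Nil by (auto simp: f_def)
    next
      case (Cons bb w')
      then have "bb # (w' @ [b']) \<in> ppos (PN l r)" using B by simp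
      then obtain c q where cq: "(if bb then r else l) = Some (c, q)" and wq: "w' @ [b'] \<in> ppos q"
        using ppos_Cons_ex by blast
      have eg: "econd q (if bb then gR else gL)" using G[OF cq refl] by blast
      have pe: "pedge (PN l r) (bb # (w' @ [b'])) = pedge q (w' @ [b'])" using pedge_Cons[OF cq] by simp
      have "if pedge q (w' @ [b']) then (if bb then gR else gL) (w' @ [b']) = (if bb then gR else gL) w' @ [b']
         else \<exists>u. (if bb then gR else gL) (w' @ [b']) = (if bb then gR else gL) w' @ [b'] @ u"
        using eg wq unfolding econd_def by blast
      then show ?thesis using pe Cons by (cases "pedge q (w' @ [b'])") (auto simp: f_def)
    qed
  qed
  have im: "f ` ppos (PN l r) \<subseteq> tpos (Node a b)"
  proof
    fix x assume "x \<in> f ` ppos (PN l r)"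
    then obtain w where w: "w \<in> ppos (PN l r)" "x = f w" by blast
    show "x \<in> tpos (Node a b)"
    proof (cases w)
      case Nil then show ?thesis using w by (simp add: f_def)
    next
      case (Cons bb w')
      then obtain c q where cq: "(if bb then r else l) = Some (c, q)" and wq: "w' \<in> ppos q"
        using ppos_Cons_ex w(1) by blast
      have "(if bb then gR else gL) w' \<in> tpos (if bb then b else a)" using G[OF cq refl] wq by blast
      then show ?thesis using w(2) Cons tpos_Cons by (simp add: f_def)
    qed
  qed
  have "f [] = []" by (simp add: f_def)
  then show "E (Node a b) (PN l r)" unfolding E_def using ec im by blast
qed

lemma contains_child: "contains (if bb then b else a) Q \<Longrightarrow> contains (Node a b) Q"
proof -
  assume "contains (if bb then b else a) Q"
  then obtain g where g: "g ` ppos Q \<subseteq> tpos (if bb then b else a)" "econd Q g" unfolding contains_alt by blast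
  have "(\<lambda>w. bb # g w) ` ppos Q \<subseteq> tpos (Node a b)"
  proof
    fix x assume "x \<in> (\<lambda>w. bb # g w) ` ppos Q"
    then obtain w where w: "w \<in> ppos Q" "x = bb # g w" by blast
    then have "g w \<in> tpos (if bb then b else a)" using g(1) by blast
    then show "x \<in> tpos (Node a b)" using w(2) tpos_Cons[of bb "g w" a b] by simp
  qed
  then show ?thesis unfolding contains_alt using econd_Cons[OF g(2)] by blast
qed

lemma contains_Node: "contains (Node a b) Q \<longleftrightarrow> E (Node a b) Q \<or> contains a Q \<or> contains b Q"
proof
  assume "contains (Node a b) Q"
  then obtain f where f: "f ` ppos Q \<subseteq> tpos (Node a b)" "econd Q f" unfolding contains_alt by blast
  show "E (Node a b) Q \<or> contains a Q \<or> contains b Q"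
  proof (cases "f []")
    case Nil
    then show ?thesis using f unfolding E_def by blast
  next
    case (Cons bb u)
    have fw: "\<exists>v. f w = bb # v" if "w \<in> ppos Q" for w
      using econd_root[OF f(2) that] Cons by auto
    have eh: "econd Q (\<lambda>w. tl (f w))" using econd_tl[OF f(2)] fw by fastforce
    have "(\<lambda>w. tl (f w)) ` ppos Q \<subseteq> tpos (if bb then b else a)"
    proof
      fix x assume "x \<in> (\<lambda>w. tl (f w)) ` ppos Q"
      then obtain w where w: "w \<in> ppos Q" "x = tl (f w)" by blast
      obtain v where v: "f w = bb # v" using fw[OF w(1)] by blast
      have "f w \<in> tpos (Node a b)" using f(1) w(1) by blast
      then show "x \<in> tpos (if bb then b else a)" using v w(2) tpos_Cons by simp
    qed
    then have "contains (if bb then b else a) Q" unfolding contains_alt using eh by blast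
    then show ?thesis by (cases bb) auto
  qed
next
  assume "E (Node a b) Q \<or> contains a Q \<or> contains b Q"
  then show "contains (Node a b) Q"
    using E_contains contains_child[of False b a Q] contains_child[of True b a Q] by auto
qed


fun spine :: "tree list \<Rightarrow> tree" where
  "spine [] = Leaf"
| "spine (R # Rs) = Node (spine Rs) R"

fun unspine :: "tree \<Rightarrow> tree list" where
  "unspine Leaf = []"
| "unspine (Node l r) = r # unspine l"

lemma spine_unspine[simp]: "spine (unspine T) = T"
  by (induction T) auto

lemma unspine_spine[simp]: "unspine (spine Rs) = Rs"
  by (induction Rs) auto

lemma tsize_spine: "tsize (spine Rs) = length Rs + sum_list (map tsize Rs)"
  by (induction Rs) auto

lemma unspine_size: "R \<in> set (unspine T) \<Longrightarrow> tsize R < tsize T"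
  by (induction T) auto

lemma E_lpa_None: "E (spine Rs) (lpa m None P) \<longleftrightarrow> m < length Rs"
proof (induction m arbitrary: Rs)
  case 0
  then show ?case by (cases Rs) (auto simp: E_Node)
next
  case (Suc m)
  then show ?case by (cases Rs) (auto simp: E_Node)
qed

lemma E_lpa_Some: "i \<le> m \<Longrightarrow> E (spine Rs) (lpa m (Some i) P) \<longleftrightarrow> m < length Rs \<and> contains (Rs ! i) P"
proof (induction m arbitrary: i Rs)
  case 0
  then show ?case by (cases Rs) (auto simp: E_Node)
next
  case (Suc m)
  show ?case
  proof (cases Rs)
    case Nil
    then show ?thesis by simp
  next
    case (Cons R Rs')
    show ?thesis
    proof (cases i)
      case 0
      then show ?thesis using Cons by (simp add: E_Node E_lpa_None)
    next
      case (Suc i')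
      then have "i' \<le> m" using Suc.prems by simp
      then show ?thesis using Cons Suc Suc.IH[of i' Rs'] by (simp add: E_Node)
    qed
  qed
qed

lemma window_step:
  assumes "i \<le> D"
  shows "(\<exists>k. i \<le> k \<and> k + (D - i) < Suc (length Rs) \<and> contains ((R # Rs) ! k) P) \<longleftrightarrow>
    (D < Suc (length Rs) \<and> contains ((R # Rs) ! i) P) \<or> (\<exists>k. i \<le> k \<and> k + (D - i) < length Rs \<and> contains (Rs ! k) P)"
proof
  assume "\<exists>k. i \<le> k \<and> k + (D - i) < Suc (length Rs) \<and> contains ((R # Rs) ! k) P"
  then obtain k where k: "i \<le> k" "k + (D - i) < Suc (length Rs)" "contains ((R # Rs) ! k) P" by blast
  show "(D < Suc (length Rs) \<and> contains ((R # Rs) ! i) P) \<or> (\<exists>k. i \<le> k \<and> k + (D - i) < length Rs \<and> contains (Rs ! k) P)"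
  proof (cases "k = i")
    case True
    then show ?thesis using k assms by auto
  next
    case False
    then obtain k' where k': "k = Suc k'" "i \<le> k'" using k(1) by (cases k) auto
    then show ?thesis using k by auto
  qed
next
  assume "(D < Suc (length Rs) \<and> contains ((R # Rs) ! i) P) \<or> (\<exists>k. i \<le> k \<and> k + (D - i) < length Rs \<and> contains (Rs ! k) P)"
  then show "\<exists>k. i \<le> k \<and> k + (D - i) < Suc (length Rs) \<and> contains ((R # Rs) ! k) P"
  proof
    assume "D < Suc (length Rs) \<and> contains ((R # Rs) ! i) P"
    then show ?thesis using assms by (intro exI[of _ i]) auto
  next
    assume "\<exists>k. i \<le> k \<and> k + (D - i) < length Rs \<and> contains (Rs ! k) P"
    then obtain k where "i \<le> k" "k + (D - i) < length Rs" "contains (Rs ! k) P" by blast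
    then show ?thesis by (intro exI[of _ "Suc k"]) auto
  qed
qed

lemma contains_spine_lpa:
  assumes "i \<le> D"
  shows "contains (spine Rs) (lpa D (Some i) P) \<longleftrightarrow>
    (\<exists>R\<in>set Rs. contains R (lpa D (Some i) P)) \<or> (\<exists>k. i \<le> k \<and> k + (D - i) < length Rs \<and> contains (Rs ! k) P)"
proof (induction Rs)
  case Nil
  then show ?case by simp
next
  case (Cons R Rs)
  have e: "E (spine (R # Rs)) (lpa D (Some i) P) \<longleftrightarrow> D < length (R # Rs) \<and> contains ((R # Rs) ! i) P"
    using E_lpa_Some[OF assms] by blast
  have "contains (spine (R # Rs)) (lpa D (Some i) P) \<longleftrightarrow>
     E (spine (R # Rs)) (lpa D (Some i) P) \<or> contains (spine Rs) (lpa D (Some i) P) \<or> contains R (lpa D (Some i) P)"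
    using contains_Node by simp
  also have "\<dots> \<longleftrightarrow> (D < Suc (length Rs) \<and> contains ((R # Rs) ! i) P) \<or>
     ((\<exists>R\<in>set Rs. contains R (lpa D (Some i) P)) \<or> (\<exists>k. i \<le> k \<and> k + (D - i) < length Rs \<and> contains (Rs ! k) P))
     \<or> contains R (lpa D (Some i) P)"
    using e Cons.IH by simp
  also have "\<dots> \<longleftrightarrow> (\<exists>R'\<in>set (R # Rs). contains R' (lpa D (Some i) P)) \<or>
     (\<exists>k. i \<le> k \<and> k + (D - i) < Suc (length Rs) \<and> contains ((R # Rs) ! k) P)"
    using window_step[OF assms, of Rs R P] by auto
  finally show ?case by simp
qed

lemma contains_set: "R \<in> set Rs \<Longrightarrow> contains R Q \<Longrightarrow> contains (spine Rs) Q"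
  by (induction Rs) (auto simp: contains_Node)

lemma QP:
  assumes "i \<le> D"
  shows "contains T (lpa D (Some i) P) \<Longrightarrow> contains T P"
proof (induction "tsize T" arbitrary: T rule: less_induct)
  case less
  let ?Rs = "unspine T"
  have "contains (spine ?Rs) (lpa D (Some i) P)" using less.prems by simp
  then have "(\<exists>R\<in>set ?Rs. contains R (lpa D (Some i) P)) \<or> (\<exists>k. i \<le> k \<and> k + (D - i) < length ?Rs \<and> contains (?Rs ! k) P)"
    using contains_spine_lpa[OF assms] by blast
  then have "\<exists>R\<in>set ?Rs. contains R P"
  proof
    assume "\<exists>R\<in>set ?Rs. contains R (lpa D (Some i) P)"
    then obtain R where R: "R \<in> set ?Rs" "contains R (lpa D (Some i) P)" by blast
    then have "contains R P" using less.hyps[OF unspine_size[OF R(1)]] by blast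
    then show ?thesis using R(1) by blast
  next
    assume "\<exists>k. i \<le> k \<and> k + (D - i) < length ?Rs \<and> contains (?Rs ! k) P"
    then obtain k where k: "k + (D - i) < length ?Rs" "contains (?Rs ! k) P" by blast
    then have "k < length ?Rs" by linarith
    then show ?thesis using nth_mem k(2) by blast
  qed
  then have "contains (spine ?Rs) P" using contains_set by blast
  then show ?case by simp
qed

lemma finite_tsize_le: "finite {T. tsize T \<le> n}"
proof (induction n)
  case 0
  have "{T. tsize T \<le> 0} \<subseteq> {Leaf}"
  proof
    fix T assume "T \<in> {T. tsize T \<le> 0}" then show "T \<in> {Leaf}" by (cases T) auto
  qed
  then show ?case using finite_subset by blast
next
  case (Suc n)
  have "{T. tsize T \<le> Suc n} \<subseteq> insert Leaf ((\<lambda>(a, b). Node a b) ` ({T. tsize T \<le> n} \<times> {T. tsize T \<le> n}))"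
  proof
    fix T assume "T \<in> {T. tsize T \<le> Suc n}" then show "T \<in> insert Leaf ((\<lambda>(a, b). Node a b) ` ({T. tsize T \<le> n} \<times> {T. tsize T \<le> n}))"
      by (cases T) auto
  qed
  then show ?case using Suc finite_subset by blast
qed

lemma finite_tsize: "finite {T. tsize T = n}"
  using finite_tsize_le[of n] by (rule finite_subset[rotated]) auto

lemma finite_avoiders: "finite (avoiders n Q)"
  unfolding avoiders_def using finite_tsize[of n] by (rule finite_subset[rotated]) auto


lemma rotate_inj: "rotate n xs = rotate n ys \<Longrightarrow> xs = ys"
proof (induction n)
  case 0 then show ?case by simp
next
  case (Suc n)
  then have "rotate1 (rotate n xs) = rotate1 (rotate n ys)" by simp
  then have "rotate n xs = rotate n ys" by (meson inj_rotate1 injD)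
  then show ?case using Suc.IH by blast
qed

lemma sum_list_rotate1: "sum_list (rotate1 (xs :: nat list)) = sum_list xs"
  by (cases xs) auto

lemma sum_list_rotate: "sum_list (rotate n (xs :: nat list)) = sum_list xs"
  by (induction n) (auto simp: sum_list_rotate1)

lemma step:
  assumes iD: "i \<le> D" and jD: "j \<le> D"
    and IH: "\<And>m. m < n \<Longrightarrow> card (avoiders m (lpa D (Some i) P)) = card (avoiders m (lpa D (Some j) P))"
  shows "card (avoiders n (lpa D (Some i) P)) \<le> card (avoiders n (lpa D (Some j) P))"
proof -
  define Qi where "Qi = lpa D (Some i) P"
  define Qj where "Qj = lpa D (Some j) P"
  define X where "X = (\<lambda>Q m. {T. tsize T = m \<and> \<not> contains T Q \<and> contains T P})"
  define B where "B = (\<lambda>m. {T. tsize T = m \<and> \<not> contains T P})"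
  have cardX: "card (X (lpa D (Some k) P) m) = card (avoiders m (lpa D (Some k) P)) - card (B m)"
    if "k \<le> D" for k m
  proof -
    have "avoiders m (lpa D (Some k) P) = X (lpa D (Some k) P) m \<union> B m"
      unfolding avoiders_def X_def B_def using QP[OF that] by blast
    moreover have "X (lpa D (Some k) P) m \<inter> B m = {}" unfolding X_def B_def by blast
    moreover have "finite (X (lpa D (Some k) P) m)" "finite (B m)"
      unfolding X_def B_def using finite_tsize[of m] by (auto intro: finite_subset[rotated])
    ultimately show ?thesis by (simp add: card_Un_disjoint)
  qed
  have "\<forall>m. \<exists>h. m < n \<longrightarrow> bij_betw h (X Qi m) (X Qj m)"
  proof
    fix m
    show "\<exists>h. m < n \<longrightarrow> bij_betw h (X Qi m) (X Qj m)"
    proof (cases "m < n")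
      case True
      have "card (X Qi m) = card (X Qj m)"
        unfolding Qi_def Qj_def using cardX[OF iD] cardX[OF jD] IH[OF True] by simp
      moreover have "finite (X Qi m)" "finite (X Qj m)"
        unfolding X_def using finite_tsize[of m] by (auto intro: finite_subset[rotated])
      ultimately show ?thesis using finite_same_card_bij by blast
    qed simp
  qed
  then obtain g where g: "\<And>m. m < n \<Longrightarrow> bij_betw (g m) (X Qi m) (X Qj m)" by metis
  define \<phi> where "\<phi> = (\<lambda>T. if contains T P then g (tsize T) T else T)"
  define S where "S = {T. tsize T < n \<and> \<not> contains T Qi}"
  have phi: "tsize (\<phi> T) = tsize T \<and> \<not> contains (\<phi> T) Qj \<and> (contains (\<phi> T) P \<longleftrightarrow> contains T P)"
    if "T \<in> S" for T
  proof (cases "contains T P")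
    case True
    have "T \<in> X Qi (tsize T)" using that True unfolding S_def X_def by blast
    moreover have "tsize T < n" using that unfolding S_def by blast
    ultimately have "g (tsize T) T \<in> X Qj (tsize T)" using g bij_betw_apply by metis
    then show ?thesis using True unfolding \<phi>_def X_def by simp
  next
    case False
    have "\<not> contains T Qj" using QP[OF jD, where T=T and P=P] False unfolding Qj_def by blast
    then show ?thesis using False unfolding \<phi>_def by simp
  qed
  have injphi: "inj_on \<phi> S"
  proof (rule inj_onI)
    fix T1 T2 assume T1: "T1 \<in> S" and T2: "T2 \<in> S" and eq: "\<phi> T1 = \<phi> T2"
    show "T1 = T2"
    proof (cases "contains T1 P")
      case True
      then have c2: "contains T2 P" using phi[OF T1] phi[OF T2] eq by metis
      have sz: "tsize T1 = tsize T2" using phi[OF T1] phi[OF T2] eq by metis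
      have "T1 \<in> X Qi (tsize T1)" "T2 \<in> X Qi (tsize T1)" using T1 T2 True c2 sz unfolding S_def X_def by auto
      moreover have "g (tsize T1) T1 = g (tsize T1) T2" using eq True c2 sz unfolding \<phi>_def by simp
      moreover have "inj_on (g (tsize T1)) (X Qi (tsize T1))"
        using g[of "tsize T1"] T1 bij_betw_imp_inj_on unfolding S_def by blast
      ultimately show ?thesis by (meson inj_onD)
    next
      case False
      then have c2: "\<not> contains T2 P" using phi[OF T1] phi[OF T2] eq by metis
      then show ?thesis using eq False unfolding \<phi>_def by simp
    qed
  qed
  define rot where "rot = (\<lambda>xs :: tree list. rotate ((length xs + i - j) mod length xs) xs)"
  define \<Psi> where "\<Psi> = (\<lambda>T. spine (rot (map \<phi> (unspine T))))"
  have inS: "set (unspine T) \<subseteq> S" if "T \<in> avoiders n Qi" for T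
  proof
    fix R assume R: "R \<in> set (unspine T)"
    have "tsize R < n" using unspine_size[OF R] that unfolding avoiders_def by simp
    moreover have "\<not> contains R Qi"
      using that R contains_spine_lpa[OF iD, of "unspine T" P] unfolding avoiders_def Qi_def by auto
    ultimately show "R \<in> S" unfolding S_def by simp
  qed
  have maps: "\<Psi> T \<in> avoiders n Qj" if T: "T \<in> avoiders n Qi" for T
  proof -
    define Rs where "Rs = unspine T"
    have TRs: "T = spine Rs" unfolding Rs_def by simp
    have RsS: "set Rs \<subseteq> S" using inS[OF T] unfolding Rs_def .
    have win: "\<not> contains (Rs ! k) P" if "i \<le> k" "k + (D - i) < length Rs" for k
      using T that contains_spine_lpa[OF iD, of Rs P] unfolding avoiders_def Qi_def TRs by auto
    define len where "len = length Rs"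
    define r where "r = (len + i - j) mod len"
    have Psi: "\<Psi> T = spine (rotate r (map \<phi> Rs))"
      unfolding \<Psi>_def rot_def r_def len_def Rs_def by simp
    have "tsize (\<Psi> T) = length Rs + sum_list (map tsize (map \<phi> Rs))"
      unfolding Psi tsize_spine by (simp add: rotate_map[symmetric] sum_list_rotate)
    also have "map tsize (map \<phi> Rs) = map tsize Rs"
      using RsS phi by auto
    finally have sz0: "tsize (\<Psi> T) = length Rs + sum_list (map tsize Rs)" .
    have "tsize T = n" using T unfolding avoiders_def by simp
    then have sz: "tsize (\<Psi> T) = n" using sz0 unfolding TRs by (simp add: tsize_spine)
    have a1: "\<forall>R'\<in>set (rotate r (map \<phi> Rs)). \<not> contains R' Qj"
      using RsS phi by auto
    have a2: "\<not> contains (rotate r (map \<phi> Rs) ! k) P" if k: "j \<le> k" "k + (D - j) < length (rotate r (map \<phi> Rs))" for k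
    proof -
      have kl: "k < len" "k + (D - j) < len" using k unfolding len_def by auto
      define k0 where "k0 = k + i - j"
      have k0: "i \<le> k0" "k0 + (D - i) < len" "k0 < len" using k kl iD jD unfolding k0_def by auto
      have "(r + k) mod len = (len + i - j + k) mod len" unfolding r_def by (simp add: mod_add_left_eq)
      also have "len + i - j + k = k0 + len" unfolding k0_def using k kl by arith
      also have "(k0 + len) mod len = k0" using k0(3) by simp
      finally have m: "(r + k) mod len = k0" .
      have "rotate r (map \<phi> Rs) ! k = map \<phi> Rs ! k0"
        using nth_rotate[of k "map \<phi> Rs" r] kl m unfolding len_def by simp
      also have "\<dots> = \<phi> (Rs ! k0)" using k0(3) unfolding len_def by simp
      finally have e: "rotate r (map \<phi> Rs) ! k = \<phi> (Rs ! k0)" .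
      have "Rs ! k0 \<in> S" using RsS k0(3) nth_mem unfolding len_def by blast
      then show ?thesis using e phi win[of k0] k0 unfolding len_def by simp
    qed
    have "\<not> contains (\<Psi> T) Qj"
      unfolding Psi Qj_def using contains_spine_lpa[OF jD, of "rotate r (map \<phi> Rs)" P] a1 a2
      unfolding Qj_def by blast
    then show ?thesis using sz unfolding avoiders_def by simp
  qed
  have inj: "inj_on \<Psi> (avoiders n Qi)"
  proof (rule inj_onI)
    fix T1 T2 assume T1: "T1 \<in> avoiders n Qi" and T2: "T2 \<in> avoiders n Qi" and eq: "\<Psi> T1 = \<Psi> T2"
    have e1: "rot (map \<phi> (unspine T1)) = rot (map \<phi> (unspine T2))"
      using arg_cong[OF eq, of unspine] unfolding \<Psi>_def by simp
    have lr: "length (rot xs) = length xs" for xs unfolding rot_def by simp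
    have "length (unspine T1) = length (unspine T2)"
      using arg_cong[OF e1, of length] unfolding lr by simp
    then have "rotate ((length (unspine T1) + i - j) mod length (unspine T1)) (map \<phi> (unspine T1))
       = rotate ((length (unspine T1) + i - j) mod length (unspine T1)) (map \<phi> (unspine T2))"
      using e1 unfolding rot_def by simp
    then have me: "map \<phi> (unspine T1) = map \<phi> (unspine T2)"
      by (rule rotate_inj)
    have ij: "inj_on \<phi> (set (unspine T1) \<union> set (unspine T2))"
      using inj_on_subset[OF injphi Un_least[OF inS[OF T1] inS[OF T2]]] .
    have "unspine T1 = unspine T2" using inj_on_map_eq_map[OF ij] me by simp
    then show "T1 = T2" by (metis spine_unspine)
  qed
  have "card (avoiders n Qi) \<le> card (avoiders n Qj)"
  proof -
    have "\<Psi> ` avoiders n Qi \<subseteq> avoiders n Qj" using maps by blast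
    then show ?thesis using card_inj_on_le[OF inj _ finite_avoiders] by blast
  qed
  then show ?thesis unfolding Qi_def Qj_def .
qed

theorem lemma18:
  fixes d i j :: nat and P :: pat
  assumes "i < d" and "j < d" and "i \<noteq> j"
  shows "wilf_equiv (lpa (d - 1) (Some i) P) (lpa (d - 1) (Some j) P)"
proof -
  have iD: "i \<le> d - 1" and jD: "j \<le> d - 1" using assms by auto
  have "card (avoiders n (lpa (d - 1) (Some i) P)) = card (avoiders n (lpa (d - 1) (Some j) P))" for n
  proof (induction n rule: less_induct)
    case (less n)
    have a: "card (avoiders n (lpa (d - 1) (Some i) P)) \<le> card (avoiders n (lpa (d - 1) (Some j) P))"
      by (rule step[OF iD jD]) (rule less)
    have b: "card (avoiders n (lpa (d - 1) (Some j) P)) \<le> card (avoiders n (lpa (d - 1) (Some i) P))"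
      by (rule step[OF jD iD]) (rule less[symmetric])
    show ?case using a b by (rule antisym)
  qed
  then show ?thesis unfolding wilf_equiv_def by blast
qed

end
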